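(* Let $d$, $p$ and $w$ be fixed nonnegative integers. There exist a constant $C>0$ and an integer $N$, depending only on $d,p,w$, such that the following holds. Let $\Delta$ be a $(d-1)$-dimensional simplicial complex whose vertex set is a disjoint union $V(\Delta)=T\sqcup W$ with $|T|=n\ge N$ and $|W|=w$, and suppose that $\tilde H_{p-1}(\mathrm{lk}_\Delta(\{v\})[W];\mathbf{k})\neq 0$ for every $v\in T$. Then there is an integer $i\ge 2$ such that there are at least $Cn^i$ subsets $W'\subseteq T$ with $|W'|=i$ and $\tilde H_{p+i-2}(\Delta[W'\cup W];\mathbf{k})\neq 0$.
   Context: A simplicial complex $\Delta$ on a finite vertex set $V$ is a family of subsets of $V$ (faces) closed under taking subsets; its dimension is $\max\{|F|:F\in\Delta\}-1$. For $U\subseteq V$, $\Delta[U]=\{F\in\Delta:F\subseteq U\}$; for a face $F$, $\mathrm{lk}_\Delta(F)=\{G\setminus F: F\subseteq G\in\Delta\}$. Fix a field $\mathbf{k}$; $\tilde H_j(\cdot;\mathbf{k})$ is reduced simplicial homology. *)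

theory Defs
  imports Complex_Main
begin

definition simplicial_complex :: "'a set set \<Rightarrow> bool" where
  "simplicial_complex \<Delta> \<longleftrightarrow> (\<forall>F\<in>\<Delta>. finite F \<and> (\<forall>G. G \<subseteq> F \<longrightarrow> G \<in> \<Delta>))"

definition induced :: "'a set set \<Rightarrow> 'a set \<Rightarrow> 'a set set" where
  "induced \<Delta> U = {F \<in> \<Delta>. F \<subseteq> U}"

definition lk :: "'a set set \<Rightarrow> 'a set \<Rightarrow> 'a set set" where
  "lk \<Delta> F = {G - F | G. G \<in> \<Delta> \<and> F \<subseteq> G}"

(* simplicial j-chains (j >= -1, the empty face is the unique (-1)-face: augmented complex),
   with faces oriented by the natural order of the vertices *)
definition chains :: "nat set set \<Rightarrow> int \<Rightarrow> (nat set \<Rightarrow> 'k::field) set" where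
  "chains \<Delta> j = {c. \<forall>F. c F \<noteq> 0 \<longrightarrow> F \<in> \<Delta> \<and> int (card F) = j + 1}"

(* simplicial boundary map: coefficient of G in the boundary of the oriented face G \<union> {v}
   is (-1)^(position of v in the increasingly ordered face) *)
definition bdry :: "nat set set \<Rightarrow> (nat set \<Rightarrow> 'k::field) \<Rightarrow> (nat set \<Rightarrow> 'k)" where
  "bdry \<Delta> c G = (if G \<in> \<Delta> then
      (\<Sum>v\<in>{v. v \<notin> G \<and> insert v G \<in> \<Delta>}. (-1) ^ card {u\<in>G. u < v} * c (insert v G))
    else 0)"

definition reduced_homology_nonzero :: "'k::field itself \<Rightarrow> nat set set \<Rightarrow> int \<Rightarrow> bool" where
  "reduced_homology_nonzero K \<Delta> j \<longleftrightarrow>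
     (\<exists>c::nat set \<Rightarrow> 'k. c \<in> chains \<Delta> j \<and> bdry \<Delta> c = (\<lambda>_. 0) \<and>
        \<not> (\<exists>b\<in>chains \<Delta> (j + 1). bdry \<Delta> b = c))"

end

theory Submission
  imports Defs "HOL-Library.Ramsey"
begin


definition sg :: "nat set \<Rightarrow> nat set \<Rightarrow> 'k::field" where
  "sg A H = (-1) ^ (\<Sum>h\<in>H. card {a\<in>A. a < h})"

definition Kf :: "nat set set \<Rightarrow> nat set \<Rightarrow> nat set \<Rightarrow> nat set set" where
  "Kf D W A = {H. H \<subseteq> W \<and> A \<union> H \<in> D}"

definition rho :: "nat set \<Rightarrow> nat set \<Rightarrow> (nat set \<Rightarrow> 'k::field) \<Rightarrow> (nat set \<Rightarrow> 'k)" where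
  "rho W A b H = (if H \<subseteq> W then sg A H * b (A \<union> H) else 0)"

lemma sg_sq: "sg A H * sg A H = (1::'k::field)"
  by (simp add: sg_def)

lemma sg_insert:
  assumes "finite H" "v \<notin> H"
  shows "(sg A (insert v H) :: 'k::field) = sg A H * (-1) ^ card {a\<in>A. a < v}"
  using assms by (simp add: sg_def power_add)

lemma card_lt_split:
  assumes "finite A" "finite B" "A \<inter> B = {}"
  shows "card {u\<in>A \<union> B. u < y} = card {u\<in>A. u < y} + card {u\<in>B. u < y}"
proof -
  have "{u\<in>A \<union> B. u < y} = {u\<in>A. u < y} \<union> {u\<in>B. u < y}" by auto
  then show ?thesis using assms by (simp add: card_Un_disjoint disjoint_iff)
qed

lemma sg_insertA:
  assumes "finite A" "finite H" "y \<notin> A"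
  shows "(sg (insert y A) H :: 'k::field) = sg A H * (-1) ^ card {h\<in>H. y < h}"
proof -
  have "(\<Sum>h\<in>H. card {a\<in>insert y A. a < h}) = (\<Sum>h\<in>H. card {a\<in>A. a < h} + (if y < h then 1 else 0))"
  proof (rule sum.cong[OF refl])
    fix h assume "h \<in> H"
    show "card {a\<in>insert y A. a < h} = card {a\<in>A. a < h} + (if y < h then 1 else 0)"
    proof (cases "y < h")
      case True
      then have "{a\<in>insert y A. a < h} = insert y {a\<in>A. a < h}" by auto
      then show ?thesis using True assms by simp
    next
      case False
      then have "{a\<in>insert y A. a < h} = {a\<in>A. a < h}" by auto
      then show ?thesis using False by simp
    qed
  qed
  also have "\<dots> = (\<Sum>h\<in>H. card {a\<in>A. a < h}) + card {h\<in>H. y < h}"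
  proof -
    have "{h\<in>H. y < h} = H \<inter> Collect ((<) y)" by auto
    then show ?thesis using assms by (simp add: sum.distrib sum.If_cases)
  qed
  finally show ?thesis by (simp add: sg_def power_add)
qed

lemma bdry_lin:
  "bdry K (\<lambda>F. s * b1 F + t * b2 F) = (\<lambda>G. s * bdry K b1 G + t * (bdry K b2 G :: 'k::field))"
  by (rule ext) (simp add: bdry_def sum_distrib_left sum.distrib[symmetric] distrib_left mult.left_commute)

lemma chains_lin:
  "b1 \<in> chains K j \<Longrightarrow> b2 \<in> chains K j \<Longrightarrow> (\<lambda>F. s * b1 F + t * (b2 F :: 'k::field)) \<in> chains K j"
proof -
  assume a: "b1 \<in> chains K j" "b2 \<in> chains K j"
  show ?thesis unfolding chains_def
  proof (intro CollectI allI impI)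
    fix F assume "s * b1 F + t * b2 F \<noteq> 0"
    then have "b1 F \<noteq> 0 \<or> b2 F \<noteq> 0" by auto
    then show "F \<in> K \<and> int (card F) = j + 1" using a by (auto simp: chains_def)
  qed
qed

lemma chains_mono: "K \<subseteq> L \<Longrightarrow> chains K j \<subseteq> chains L j"
  unfolding chains_def by auto

lemma finite_insert_set: "finite L \<Longrightarrow> finite {v. v \<notin> G \<and> insert v G \<in> L}"
proof -
  assume fin: "finite L"
  have "inj_on (\<lambda>v. insert v G) (- G)" unfolding inj_on_def by blast
  then have "finite ((\<lambda>v. insert v G) -` L \<inter> - G)" by (rule finite_vimage_IntI[OF fin])
  moreover have "{v. v \<notin> G \<and> insert v G \<in> L} = (\<lambda>v. insert v G) -` L \<inter> - G" by auto
  ultimately show ?thesis by simp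
qed

lemma bdry_mono:
  assumes KL: "K \<subseteq> L" and fin: "finite L" and dc: "\<forall>F\<in>K. \<forall>G\<subseteq>F. G \<in> K"
    and c: "c \<in> chains K j"
  shows "bdry K c = bdry L (c :: nat set \<Rightarrow> 'k::field)"
proof (rule ext)
  fix G
  have cz: "\<And>F. F \<notin> K \<Longrightarrow> c F = 0" using c by (auto simp: chains_def)
  show "bdry K c G = bdry L c G"
  proof (cases "G \<in> K")
    case True
    then have GL: "G \<in> L" using KL by auto
    have fs: "finite {v. v \<notin> G \<and> insert v G \<in> L}"
      by (rule finite_insert_set[OF fin])
    have "(\<Sum>v\<in>{v. v \<notin> G \<and> insert v G \<in> K}. (-1) ^ card {u\<in>G. u < v} * c (insert v G))
        = (\<Sum>v\<in>{v. v \<notin> G \<and> insert v G \<in> L}. (-1) ^ card {u\<in>G. u < v} * c (insert v G))"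
      by (rule sum.mono_neutral_left[OF fs]) (use KL cz in auto)
    then show ?thesis using True GL by (simp add: bdry_def)
  next
    case False
    have "bdry L c G = 0"
    proof (cases "G \<in> L")
      case True
      have "\<And>v. v \<in> {v. v \<notin> G \<and> insert v G \<in> L} \<Longrightarrow> c (insert v G) = 0"
      proof -
        fix v
        have "insert v G \<notin> K" using False dc by (meson subset_insertI)
        then show "c (insert v G) = 0" by (rule cz)
      qed
      then show ?thesis using True by (simp add: bdry_def)
    qed (simp add: bdry_def)
    then show ?thesis using False by (simp add: bdry_def)
  qed
qed

lemma decomp:
  fixes b :: "nat set \<Rightarrow> 'k::field"
  assumes fW: "finite W" and fW': "finite W'" and XV: "X \<subseteq> Pow (W' \<union> W)" and disj: "W' \<inter> W = {}"
    and AW': "A \<subseteq> W'" and bch: "\<forall>F. b F \<noteq> 0 \<longrightarrow> F \<in> X" and HW: "H \<subseteq> W" and AH: "A \<union> H \<in> X"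
  shows "sg A H * bdry X b (A \<union> H) = bdry (Kf X W A) (rho W A b) H
     + (\<Sum>y\<in>{y\<in>W' - A. insert y (A \<union> H) \<in> X}. sg A H * (-1) ^ card {u\<in>A \<union> H. u < y} * b (insert y (A \<union> H)))"
proof -
  define V1 where "V1 = {v. v \<notin> H \<and> insert v H \<in> Kf X W A}"
  define V2 where "V2 = {y\<in>W' - A. insert y (A \<union> H) \<in> X}"
  have V: "{v. v \<notin> A \<union> H \<and> insert v (A \<union> H) \<in> X} = V1 \<union> V2"
  proof (rule set_eqI)
    fix v
    show "v \<in> {v. v \<notin> A \<union> H \<and> insert v (A \<union> H) \<in> X} \<longleftrightarrow> v \<in> V1 \<union> V2"
    proof
      assume a: "v \<in> {v. v \<notin> A \<union> H \<and> insert v (A \<union> H) \<in> X}"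
      then have "v \<in> W' \<union> W" using XV by auto
      then show "v \<in> V1 \<union> V2" using a HW by (auto simp: V1_def V2_def Kf_def)
    next
      assume "v \<in> V1 \<union> V2"
      then show "v \<in> {v. v \<notin> A \<union> H \<and> insert v (A \<union> H) \<in> X}"
        using AW' HW disj by (auto simp: V1_def V2_def Kf_def)
    qed
  qed
  have V1W: "V1 \<subseteq> W" by (auto simp: V1_def Kf_def)
  have V2W: "V2 \<subseteq> W'" by (auto simp: V2_def)
  have fV1: "finite V1" using V1W fW finite_subset by blast
  have fV2: "finite V2" using V2W fW' finite_subset by blast
  have dV: "V1 \<inter> V2 = {}" using V1W V2W disj by auto
  have fA: "finite A" using AW' fW' finite_subset by blast
  have fH: "finite H" using HW fW finite_subset by blast
  have AHd: "A \<inter> H = {}" using AW' HW disj by auto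
  define t where "t v = (-1) ^ card {u\<in>A \<union> H. u < v} * b (insert v (A \<union> H))" for v
  have "bdry X b (A \<union> H) = (\<Sum>v\<in>V1 \<union> V2. t v)"
    using AH V by (simp add: bdry_def t_def)
  also have "\<dots> = (\<Sum>v\<in>V1. t v) + (\<Sum>v\<in>V2. t v)"
    by (rule sum.union_disjoint[OF fV1 fV2 dV])
  finally have e1: "sg A H * bdry X b (A \<union> H) = (\<Sum>v\<in>V1. sg A H * t v) + (\<Sum>v\<in>V2. sg A H * t v)"
    by (simp add: sum_distrib_left distrib_left)
  have HK: "H \<in> Kf X W A" using HW AH by (simp add: Kf_def)
  have e2: "bdry (Kf X W A) (rho W A b) H = (\<Sum>v\<in>V1. (-1) ^ card {u\<in>H. u < v} * rho W A b (insert v H))"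
    using HK by (simp add: bdry_def V1_def)
  have e3: "(\<Sum>v\<in>V1. sg A H * t v) = (\<Sum>v\<in>V1. (-1) ^ card {u\<in>H. u < v} * rho W A b (insert v H))"
  proof (rule sum.cong[OF refl])
    fix v assume v: "v \<in> V1"
    then have vH: "v \<notin> H" and ivW: "insert v H \<subseteq> W" by (auto simp: V1_def Kf_def)
    have "rho W A b (insert v H) = sg A (insert v H) * b (A \<union> insert v H)"
      using ivW by (simp add: rho_def)
    also have "\<dots> = sg A H * (-1) ^ card {a\<in>A. a < v} * b (insert v (A \<union> H))"
    proof -
      have "(sg A (insert v H) :: 'k) = sg A H * (-1) ^ card {a\<in>A. a < v}" by (rule sg_insert[OF fH vH])
      then show ?thesis by simp
    qed
    finally have r: "rho W A b (insert v H) = sg A H * (-1) ^ card {a\<in>A. a < v} * b (insert v (A \<union> H))" .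
    have c: "card {u\<in>A \<union> H. u < v} = card {u\<in>A. u < v} + card {u\<in>H. u < v}"
      by (rule card_lt_split[OF fA fH AHd])
    show "sg A H * t v = (-1) ^ card {u\<in>H. u < v} * rho W A b (insert v H)"
      unfolding r t_def c by (simp add: power_add mult_ac)
  qed
  show ?thesis using e1 e2 e3 by (simp add: V2_def t_def mult.assoc)
qed




lemma bdry_scale: "bdry K (\<lambda>F. s * b F) = (\<lambda>G. s * (bdry K b G :: 'k::field))"
  by (rule ext) (simp add: bdry_def sum_distrib_left mult.left_commute)

lemma bdry_zero: "bdry K (\<lambda>_. 0::'k::field) = (\<lambda>_. 0)"
  by (rule ext) (simp add: bdry_def)

lemma card_split_lt_gt:
  fixes H :: "nat set"
  assumes "finite H" "y \<notin> H"
  shows "card {u\<in>H. u < y} + card {h\<in>H. y < h} = card H"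
proof -
  have "H = {u\<in>H. u < y} \<union> {h\<in>H. y < h}" using assms(2) by auto (metis linorder_neqE_nat)
  moreover have "{u\<in>H. u < y} \<inter> {h\<in>H. y < h} = {}" by auto
  ultimately show ?thesis using assms(1)
    by (metis (no_types, lifting) card_Un_disjoint finite_Un)
qed

lemma term_y:
  assumes fA: "finite A" and fH: "finite H" and d: "A \<inter> H = {}" and yA: "y \<notin> A" and yH: "y \<notin> H"
  shows "sg A H * (-1) ^ card {u\<in>A \<union> H. u < y} * sg (insert y A) H
       = ((-1) ^ card {u\<in>A. u < y} * (-1) ^ card H :: 'k::field)"
proof -
  have s: "(sg (insert y A) H :: 'k) = sg A H * (-1) ^ card {h\<in>H. y < h}"
    by (rule sg_insertA[OF fA fH yA])
  have c: "card {u\<in>A \<union> H. u < y} = card {u\<in>A. u < y} + card {u\<in>H. u < y}"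
    by (rule card_lt_split[OF fA fH d])
  have h: "card H = card {u\<in>H. u < y} + card {h\<in>H. y < h}"
    using card_split_lt_gt[OF fH yH] by simp
  have "sg A H * (-1) ^ card {u\<in>A \<union> H. u < y} * sg (insert y A) H
      = (sg A H * sg A H) * ((-1) ^ card {u\<in>A. u < y} * ((-1) ^ card {u\<in>H. u < y} * (-1) ^ card {h\<in>H. y < h}) :: 'k)"
    unfolding s c by (simp add: power_add mult_ac)
  also have "\<dots> = (-1) ^ card {u\<in>A. u < y} * (-1) ^ card H"
    unfolding sg_sq h by (simp add: power_add)
  finally show ?thesis .
qed




lemma sg_nz: "sg A H \<noteq> (0::'k::field)" by (simp add: sg_def)

lemma core:
  fixes D :: "nat set set" and z :: "nat set \<Rightarrow> 'k::field" and L :: "nat set set"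
  assumes finD: "finite D" and dc: "\<forall>F\<in>D. \<forall>G\<subseteq>F. G \<in> D"
    and fW: "finite W" and fW': "finite W'" and disj: "W' \<inter> W = {}" and ci: "card W' = i" and i2: "2 \<le> i"
    and Lfin: "finite L" and Ldc: "\<forall>F\<in>L. \<forall>G\<subseteq>F. G\<in>L" and LW: "L \<subseteq> Pow W"
    and KL: "\<forall>A. A \<subseteq> W' \<longrightarrow> A \<noteq> {} \<longrightarrow> Kf D W A \<subseteq> L"
    and zch: "z \<in> chains L (int p - 1)" and zcy: "bdry L z = (\<lambda>_. 0)"
    and zsupp: "\<forall>G H. G \<subseteq> W' \<longrightarrow> card G = i - 1 \<longrightarrow> z H \<noteq> 0 \<longrightarrow> G \<union> H \<in> D"
    and znb: "\<not> (\<exists>b\<in>chains L (int p). bdry L b = z)"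
    and top: "\<forall>c::nat set \<Rightarrow> 'k. c \<in> chains (Kf D W W') (int p - 1) \<longrightarrow> bdry (Kf D W W') c = (\<lambda>_. 0) \<longrightarrow> (\<exists>e\<in>chains L (int p). bdry L e = c)"
  shows "reduced_homology_nonzero TYPE('k) (induced D (W' \<union> W)) (int p + int i - 2)"
proof -
  define X where "X = induced D (W' \<union> W)"
  have XV: "X \<subseteq> Pow (W' \<union> W)" by (auto simp: X_def induced_def)
  have XD: "X \<subseteq> D" by (auto simp: X_def induced_def)
  have Xdc: "\<forall>F\<in>X. \<forall>G\<subseteq>F. G\<in>X" using dc by (auto simp: X_def induced_def)
  have KX: "\<And>A. A \<subseteq> W' \<Longrightarrow> Kf X W A = Kf D W A" by (auto simp: Kf_def X_def induced_def)
  have Kdc: "\<And>A. \<forall>F\<in>Kf D W A. \<forall>G\<subseteq>F. G\<in>Kf D W A"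
  proof (intro ballI allI impI)
    fix A F G assume "F \<in> Kf D W A" "G \<subseteq> F"
    then show "G \<in> Kf D W A" using dc by (auto simp: Kf_def) (meson Un_mono subset_refl)
  qed
  have zL: "\<And>H. z H \<noteq> 0 \<Longrightarrow> H \<in> L \<and> card H = p" using zch by (auto simp: chains_def)
  have zW: "\<And>H. z H \<noteq> 0 \<Longrightarrow> H \<subseteq> W" using zL LW by auto
  have i1: "1 \<le> i - 1" using i2 by simp
  define \<tau> where "\<tau> B = ((-1::'k) ^ (\<Sum>x\<in>W'-B. card {u\<in>W'. u < x}))" for B
  have tsq: "\<And>B. \<tau> B * \<tau> B = 1" by (simp add: \<tau>_def)
  define c where "c F = (if F \<subseteq> W' \<union> W \<and> card (F \<inter> W') = i - 1
      then \<tau> (F \<inter> W') * sg (F \<inter> W') (F \<inter> W) * z (F \<inter> W) else 0)" for F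
  have cAH: "\<And>A H. A \<subseteq> W' \<Longrightarrow> H \<subseteq> W \<Longrightarrow> c (A \<union> H) = (if card A = i - 1 then \<tau> A * sg A H * z H else 0)"
  proof -
    fix A H assume a: "A \<subseteq> W'" "H \<subseteq> W"
    have "(A \<union> H) \<inter> W' = A" "(A \<union> H) \<inter> W = H" "A \<union> H \<subseteq> W' \<union> W" using a disj by auto
    then show "c (A \<union> H) = (if card A = i - 1 then \<tau> A * sg A H * z H else 0)"
      using a by (simp add: c_def)
  qed
  have cch: "c \<in> chains X (int p + int i - 2)"
    unfolding chains_def
  proof (intro CollectI allI impI)
    fix F assume nz: "c F \<noteq> 0"
    then have F: "F \<subseteq> W' \<union> W" "card (F \<inter> W') = i - 1" "z (F \<inter> W) \<noteq> 0"
      by (auto simp: c_def split: if_splits)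
    have FF: "F = (F \<inter> W') \<union> (F \<inter> W)" using F(1) by auto
    have "(F \<inter> W') \<union> (F \<inter> W) \<in> D" using zsupp F by blast
    then have FD: "F \<in> D" using FF by simp
    have cw: "card (F \<inter> W) = p" using zL F(3) by blast
    have "card F = card (F \<inter> W') + card (F \<inter> W)"
      by (subst FF, rule card_Un_disjoint) (use fW fW' disj in auto)
    then have "card F = i - 1 + p" using F cw by simp
    then show "F \<in> X \<and> int (card F) = int p + int i - 2 + 1"
      using FD F(1) i2 by (auto simp: X_def induced_def)
  qed
  have cX: "\<forall>F. c F \<noteq> 0 \<longrightarrow> F \<in> X" using cch by (auto simp: chains_def)
  have ccy: "bdry X c = (\<lambda>_. 0)"
  proof (rule ext)
    fix F
    show "bdry X c F = 0"
    proof (cases "F \<in> X")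
      case False then show ?thesis by (simp add: bdry_def)
    next
      case True
      define A where "A = F \<inter> W'"
      define H where "H = F \<inter> W"
      have FAH: "F = A \<union> H" using True XV by (auto simp: A_def H_def)
      have AW': "A \<subseteq> W'" and HW: "H \<subseteq> W" by (auto simp: A_def H_def)
      have fA: "finite A" using AW' fW' finite_subset by blast
      have fH: "finite H" using HW fW finite_subset by blast
      have AHd: "A \<inter> H = {}" using AW' HW disj by auto
      have AHX: "A \<union> H \<in> X" using True FAH by simp
      note dec = decomp[OF fW fW' XV disj AW' cX HW AHX]
      have r1: "bdry (Kf X W A) (rho W A c) H = 0"
      proof (cases "card A = i - 1")
        case True
        have rr: "rho W A c = (\<lambda>H'. \<tau> A * z H')"
        proof (rule ext)
          fix H'
          show "rho W A c H' = \<tau> A * z H'"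
          proof (cases "H' \<subseteq> W")
            case True
            then have "rho W A c H' = sg A H' * (\<tau> A * sg A H' * z H')"
              using cAH[OF AW' True] \<open>card A = i - 1\<close> by (simp add: rho_def)
            also have "\<dots> = (sg A H' * sg A H') * \<tau> A * z H'" by (simp add: mult_ac)
            finally show ?thesis by (simp add: sg_sq)
          next
            case False
            then show ?thesis using zW by (auto simp: rho_def)
          qed
        qed
        have Ane: "A \<noteq> {}" using True i1 by auto
        have KXL: "Kf X W A \<subseteq> L" using KL AW' Ane KX by auto
        have zK: "z \<in> chains (Kf X W A) (int p - 1)"
          unfolding chains_def
        proof (intro CollectI allI impI)
          fix H' assume "z H' \<noteq> 0"
          then have "H' \<subseteq> W" "A \<union> H' \<in> D" "card H' = p" using zW zsupp AW' True zL by blast+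
          then show "H' \<in> Kf X W A \<and> int (card H') = int p - 1 + 1"
            using AW' by (auto simp: Kf_def X_def induced_def)
        qed
        have "bdry (Kf X W A) z = bdry L z"
          by (rule bdry_mono[OF KXL Lfin _ zK]) (use Kdc KX AW' in simp)
        then show ?thesis unfolding rr bdry_scale using zcy by simp
      next
        case False
        have "rho W A c = (\<lambda>_. 0)"
          by (rule ext) (use cAH[OF AW'] False in \<open>simp add: rho_def\<close>)
        then show ?thesis by (simp add: bdry_zero)
      qed
      have r2: "(\<Sum>y\<in>{y\<in>W' - A. insert y (A \<union> H) \<in> X}. sg A H * (-1) ^ card {u\<in>A \<union> H. u < y} * c (insert y (A \<union> H))) = 0"
      proof (cases "card A = i - 2")
        case False
        have "\<And>y. y \<in> W' - A \<Longrightarrow> c (insert y (A \<union> H)) = 0"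
        proof -
          fix y assume y: "y \<in> W' - A"
          have iy: "insert y (A \<union> H) = insert y A \<union> H" by simp
          have "card (insert y A) = card A + 1" using y fA by simp
          then have "card (insert y A) \<noteq> i - 1" using False i2 by simp
          then show "c (insert y (A \<union> H)) = 0" unfolding iy using cAH[of "insert y A" H] y AW' HW by simp
        qed
        then show ?thesis by (simp add: sum.neutral)
      next
        case True
        define t where "t y = sg A H * (-1) ^ card {u\<in>A \<union> H. u < y} * c (insert y (A \<union> H))" for y
        have "(\<Sum>y\<in>{y\<in>W' - A. insert y (A \<union> H) \<in> X}. t y) = (\<Sum>y\<in>W' - A. t y)"
          by (rule sum.mono_neutral_left) (use fW' cX t_def in auto)
        moreover have "card (W' - A) = 2" using ci True AW' fA i2 by (simp add: card_Diff_subset)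
        then obtain a b where ab: "W' - A = {a, b}" "a < b"
          by (metis card_2_iff insert_commute linorder_neqE_nat)
        have aA: "a \<notin> A" "b \<notin> A" "a \<in> W'" "b \<in> W'" using ab by auto
        have W'eq: "W' = A \<union> {a, b}" using ab AW' by auto
        have ty: "\<And>y y'. W' - insert y A = {y'} \<Longrightarrow> y \<in> W' \<Longrightarrow> y \<notin> A \<Longrightarrow>
            t y = (-1) ^ card {u\<in>A. u < y} * (-1) ^ card H * (-1) ^ card {u\<in>W'. u < y'} * z H"
        proof -
          fix y y' assume a1: "W' - insert y A = {y'}" and a2: "y \<in> W'" "y \<notin> A"
          have yH: "y \<notin> H" using a2 HW disj by auto
          have iy: "insert y (A \<union> H) = insert y A \<union> H" by simp
          have cA: "card (insert y A) = i - 1" using True fA a2 i2 by simp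
          have "c (insert y (A \<union> H)) = \<tau> (insert y A) * sg (insert y A) H * z H"
            unfolding iy using cAH[of "insert y A" H] a2 AW' HW cA by simp
          moreover have "\<tau> (insert y A) = (-1) ^ card {u\<in>W'. u < y'}" unfolding \<tau>_def a1 by simp
          ultimately have "t y = (sg A H * (-1) ^ card {u\<in>A \<union> H. u < y} * sg (insert y A) H) * (-1) ^ card {u\<in>W'. u < y'} * z H"
            by (simp add: t_def mult_ac)
          then show "t y = (-1) ^ card {u\<in>A. u < y} * (-1) ^ card H * (-1) ^ card {u\<in>W'. u < y'} * z H"
            unfolding term_y[OF fA fH AHd a2(2) yH] .
        qed
        have "W' - insert a A = {b}" using ab by auto
        then have ta: "t a = (-1) ^ card {u\<in>A. u < a} * (-1) ^ card H * (-1) ^ card {u\<in>W'. u < b} * z H"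
          using ty aA by blast
        have "W' - insert b A = {a}" using ab by auto
        then have tb: "t b = (-1) ^ card {u\<in>A. u < b} * (-1) ^ card H * (-1) ^ card {u\<in>W'. u < a} * z H"
          using ty aA by blast
        have "{u\<in>W'. u < b} = insert a {u\<in>A. u < b}" using W'eq ab by auto
        then have cb: "card {u\<in>W'. u < b} = card {u\<in>A. u < b} + 1" using aA fA by simp
        have "{u\<in>W'. u < a} = {u\<in>A. u < a}" using W'eq ab by auto
        then have ca: "card {u\<in>W'. u < a} = card {u\<in>A. u < a}" by simp
        have "(\<Sum>y\<in>W' - A. t y) = t a + t b" using ab by simp
        also have "\<dots> = 0" unfolding ta tb cb ca by (simp add: power_add mult_ac)
        finally show ?thesis using \<open>(\<Sum>y\<in>{y\<in>W' - A. insert y (A \<union> H) \<in> X}. t y) = (\<Sum>y\<in>W' - A. t y)\<close>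
          by (simp add: t_def)
      qed
      have "sg A H * bdry X c (A \<union> H) = 0" using dec r1 r2 by simp
      then have "sg A H * (sg A H * bdry X c (A \<union> H)) = 0" by simp
      then have "bdry X c (A \<union> H) = 0" by (simp add: mult.assoc[symmetric] sg_sq)
      then show ?thesis using FAH by simp
    qed
  qed
  have cnb: "\<not> (\<exists>b\<in>chains X (int p + int i - 2 + 1). bdry X b = c)"
  proof
    assume "\<exists>b\<in>chains X (int p + int i - 2 + 1). bdry X b = c"
    then obtain b where bch: "b \<in> chains X (int p + int i - 2 + 1)" and bb: "bdry X b = c" by blast
    have bX: "\<And>F. b F \<noteq> 0 \<Longrightarrow> F \<in> X \<and> card F = p + i" using bch i2 by (auto simp: chains_def)
    have bX': "\<forall>F. b F \<noteq> 0 \<longrightarrow> F \<in> X" using bX by blast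
    have cardU: "\<And>H. H \<subseteq> W \<Longrightarrow> card (W' \<union> H) = i + card H"
      using ci fW' fW disj by (metis card_Un_disjoint disjoint_iff finite_subset subsetD)
    define b' where "b' = rho W W' b"
    have b'ch: "b' \<in> chains (Kf D W W') (int p - 1)"
      unfolding chains_def
    proof (intro CollectI allI impI)
      fix H assume "b' H \<noteq> 0"
      then have HW: "H \<subseteq> W" and "b (W' \<union> H) \<noteq> 0" by (auto simp: b'_def rho_def split: if_splits)
      then have "W' \<union> H \<in> X" "card (W' \<union> H) = p + i" using bX by auto
      then show "H \<in> Kf D W W' \<and> int (card H) = int p - 1 + 1"
        using HW XD cardU[OF HW] by (auto simp: Kf_def)
    qed
    have b'cy: "bdry (Kf D W W') b' = (\<lambda>_. 0)"
    proof (rule ext)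
      fix H
      show "bdry (Kf D W W') b' H = 0"
      proof (cases "H \<in> Kf D W W'")
        case False then show ?thesis by (simp add: bdry_def)
      next
        case True
        then have HW: "H \<subseteq> W" and "W' \<union> H \<in> D" by (auto simp: Kf_def)
        then have WHX: "W' \<union> H \<in> X" by (auto simp: X_def induced_def)
        note dec = decomp[OF fW fW' XV disj subset_refl bX' HW WHX]
        have "i \<noteq> i - 1" using i2 by simp
        then have "c (W' \<union> H) = 0" using cAH[OF subset_refl HW] ci by simp
        then have "bdry X b (W' \<union> H) = 0" using bb by simp
        then have "bdry (Kf X W W') (rho W W' b) H = 0" using dec by simp
        then show ?thesis using KX[OF subset_refl] by (simp add: b'_def)
      qed
    qed
    obtain e where ech: "e \<in> chains L (int p)" and eb: "bdry L e = b'" using top b'ch b'cy by blast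
    obtain x where xW: "x \<in> W'" using ci i2 by fastforce
    define G where "G = W' - {x}"
    have GW: "G \<subseteq> W'" and xG: "x \<notin> G" and W'G: "W' = insert x G" using xW by (auto simp: G_def)
    have fG: "finite G" using GW fW' finite_subset by blast
    have cG: "card G = i - 1" using ci xW fW' by (simp add: G_def)
    have Gne: "G \<noteq> {}" using cG i1 by auto
    define g where "g = rho W G b"
    have gch: "g \<in> chains (Kf D W G) (int p)"
      unfolding chains_def
    proof (intro CollectI allI impI)
      fix H assume "g H \<noteq> 0"
      then have HW: "H \<subseteq> W" and "b (G \<union> H) \<noteq> 0" by (auto simp: g_def rho_def split: if_splits)
      then have GX: "G \<union> H \<in> X" and cGH: "card (G \<union> H) = p + i" using bX by auto
      have "card (G \<union> H) = card G + card H"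
        by (rule card_Un_disjoint) (use fG fW HW GW disj finite_subset in auto)
      then have "card H = p + 1" using cGH cG i2 by simp
      then show "H \<in> Kf D W G \<and> int (card H) = int p + 1"
        using HW XD GX by (auto simp: Kf_def)
    qed
    define \<epsilon> where "\<epsilon> = ((-1::'k) ^ card {u\<in>G. u < x} * (-1) ^ p)"
    have eq: "\<And>H. \<tau> G * z H = bdry (Kf D W G) g H + \<epsilon> * b' H"
    proof -
      fix H
      show "\<tau> G * z H = bdry (Kf D W G) g H + \<epsilon> * b' H"
      proof (cases "H \<in> Kf D W G")
        case True
        then have HW: "H \<subseteq> W" and "G \<union> H \<in> D" by (auto simp: Kf_def)
        then have GHX: "G \<union> H \<in> X" using GW by (auto simp: X_def induced_def)
        have fH: "finite H" using HW fW finite_subset by blast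
        have GHd: "G \<inter> H = {}" using GW HW disj by auto
        have xH: "x \<notin> H" using xW HW disj by auto
        note dec = decomp[OF fW fW' XV disj GW bX' HW GHX]
        have "bdry X b (G \<union> H) = \<tau> G * sg G H * z H" using bb cAH[OF GW HW] cG by simp
        then have "sg G H * bdry X b (G \<union> H) = (sg G H * sg G H) * (\<tau> G * z H)" by (simp add: mult_ac)
        then have lhs: "sg G H * bdry X b (G \<union> H) = \<tau> G * z H" by (simp add: sg_sq)
        have WG: "W' - G = {x}" using xW by (auto simp: G_def)
        have ins: "insert x (G \<union> H) = W' \<union> H" using W'G by simp
        have bW: "b (W' \<union> H) = sg W' H * b' H"
          using HW by (simp add: b'_def rho_def mult.assoc[symmetric] sg_sq)
        have sm: "(\<Sum>y\<in>{y\<in>W' - G. insert y (G \<union> H) \<in> X}. sg G H * (-1) ^ card {u\<in>G \<union> H. u < y} * b (insert y (G \<union> H)))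
             = \<epsilon> * b' H"
        proof (cases "W' \<union> H \<in> X \<and> b' H \<noteq> 0")
          case True
          then have "{y\<in>W' - G. insert y (G \<union> H) \<in> X} = {x}" using WG ins by auto
          then have "(\<Sum>y\<in>{y\<in>W' - G. insert y (G \<union> H) \<in> X}. sg G H * (-1) ^ card {u\<in>G \<union> H. u < y} * b (insert y (G \<union> H)))
              = (sg G H * (-1) ^ card {u\<in>G \<union> H. u < x} * sg (insert x G) H) * b' H"
            using ins bW W'G by (simp add: mult_ac)
          also have "\<dots> = ((-1) ^ card {u\<in>G. u < x} * (-1) ^ card H) * b' H"
            unfolding term_y[OF fG fH GHd xG xH] ..
          also have "card H = p"
          proof -
            have "b (W' \<union> H) \<noteq> 0" using True bW sg_nz by simp
            then have "card (W' \<union> H) = p + i" using bX by blast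
            then show ?thesis using cardU[OF HW] by simp
          qed
          finally show ?thesis by (simp add: \<epsilon>_def)
        next
          case False
          then have z: "b' H = 0 \<or> W' \<union> H \<notin> X" by blast
          have bz: "b (W' \<union> H) = 0"
          proof (cases "b' H = 0")
            case True then show ?thesis using bW by simp
          next
            case False then have "W' \<union> H \<notin> X" using z by blast
            then show ?thesis using bX by blast
          qed
          then have b'z: "b' H = 0" using bW sg_sq[of W' H]
            by (metis mult_eq_0_iff one_neq_zero)
          have "\<And>y. y \<in> {y\<in>W' - G. insert y (G \<union> H) \<in> X} \<Longrightarrow> b (insert y (G \<union> H)) = 0"
            using WG ins bz by auto
          then show ?thesis using b'z by simp
        qed
        show ?thesis using dec lhs sm KX[OF GW] by (simp add: g_def)
      next
        case False
        have z0: "z H = 0"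
        proof (rule ccontr)
          assume nz: "z H \<noteq> 0"
          then have "G \<union> H \<in> D" "H \<subseteq> W" using zsupp GW cG zW by blast+
          then show False using False by (simp add: Kf_def)
        qed
        have b0: "b' H = 0"
        proof (rule ccontr)
          assume "b' H \<noteq> 0"
          then have "H \<in> Kf D W W'" using b'ch by (auto simp: chains_def)
          then have "G \<union> H \<in> D" "H \<subseteq> W" using dc GW by (auto simp: Kf_def) (meson Un_mono subset_refl)
          then show False using False by (simp add: Kf_def)
        qed
        show ?thesis using False z0 b0 by (simp add: bdry_def)
      qed
    qed
    have KGL: "Kf D W G \<subseteq> L" using KL GW Gne by blast
    have gm: "bdry (Kf D W G) g = bdry L g" by (rule bdry_mono[OF KGL Lfin Kdc gch])
    define f where "f F = \<tau> G * g F + (\<tau> G * \<epsilon>) * e F" for F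
    have fch: "f \<in> chains L (int p)"
      unfolding f_def by (rule chains_lin[OF _ ech]) (use chains_mono[OF KGL] gch in blast)
    have "bdry L f = z"
    proof (rule ext)
      fix H
      have "bdry L f H = \<tau> G * bdry L g H + (\<tau> G * \<epsilon>) * bdry L e H"
        unfolding f_def bdry_lin by simp
      also have "\<dots> = \<tau> G * (bdry (Kf D W G) g H + \<epsilon> * b' H)"
        using gm eb by (simp add: algebra_simps)
      also have "\<dots> = \<tau> G * (\<tau> G * z H)" using eq by simp
      also have "\<dots> = z H" by (simp add: mult.assoc[symmetric] tsq)
      finally show "bdry L f H = z H" .
    qed
    then show False using znb fch by blast
  qed
  show ?thesis unfolding reduced_homology_nonzero_def X_def[symmetric] using cch ccy cnb by blast
qed




lemma lk_eq:
  assumes "v \<notin> W"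
  shows "induced (lk D {v}) W = Kf D W {v}"
proof (rule set_eqI)
  fix H
  show "H \<in> induced (lk D {v}) W \<longleftrightarrow> H \<in> Kf D W {v}"
  proof
    assume "H \<in> induced (lk D {v}) W"
    then obtain G where "H = G - {v}" "G \<in> D" "v \<in> G" "H \<subseteq> W" by (auto simp: induced_def lk_def)
    moreover then have "{v} \<union> H = G" by auto
    ultimately show "H \<in> Kf D W {v}" by (simp add: Kf_def)
  next
    assume a: "H \<in> Kf D W {v}"
    then have "H \<subseteq> W" "{v} \<union> H \<in> D" by (auto simp: Kf_def)
    moreover have "H = ({v} \<union> H) - {v}" using assms \<open>H \<subseteq> W\<close> by auto
    ultimately show "H \<in> induced (lk D {v}) W" unfolding induced_def lk_def by blast
  qed
qed

lemma homog:
  fixes D :: "nat set set"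
  assumes sc: "simplicial_complex D" and cardle: "\<forall>F\<in>D. card F \<le> d" and DV: "D \<subseteq> Pow (T \<union> W)"
    and disj: "T \<inter> W = {}" and fT: "finite T" and fW: "finite W"
    and hyp: "\<forall>v\<in>T. reduced_homology_nonzero TYPE('k::field) (induced (lk D {v}) W) (int p - 1)"
    and ST: "S \<subseteq> T" and cS: "d + 1 \<le> card S"
    and hom: "\<forall>G1 G2. G1 \<subseteq> S \<and> G2 \<subseteq> S \<and> card G1 = card G2 \<and> 1 \<le> card G1 \<and> card G1 \<le> d \<longrightarrow> Kf D W G1 = Kf D W G2"
  shows "\<exists>W'\<subseteq>S. 2 \<le> card W' \<and> reduced_homology_nonzero TYPE('k) (induced D (W' \<union> W)) (int p + int (card W') - 2)"
proof -
  have fS: "finite S" using ST fT finite_subset by blast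
  have dc: "\<forall>F\<in>D. \<forall>G\<subseteq>F. G \<in> D" using sc by (simp add: simplicial_complex_def)
  have finD: "finite D" using DV fT fW by (meson finite_Pow_iff finite_UnI finite_subset)
  have Kdc: "\<And>A. \<forall>F\<in>Kf D W A. \<forall>G\<subseteq>F. G\<in>Kf D W A"
  proof (intro ballI allI impI)
    fix A F G assume "F \<in> Kf D W A" "G \<subseteq> F"
    then show "G \<in> Kf D W A" using dc by (auto simp: Kf_def) (meson Un_mono subset_refl)
  qed
  have KW: "\<And>A. Kf D W A \<subseteq> Pow W" by (auto simp: Kf_def)
  have Kfin: "\<And>A. finite (Kf D W A)" using KW fW by (meson finite_Pow_iff finite_subset)
  have Kbig: "\<And>G. finite G \<Longrightarrow> d < card G \<Longrightarrow> Kf D W G = {}"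
  proof -
    fix G :: "nat set" assume fG: "finite G" and dG: "d < card G"
    show "Kf D W G = {}"
    proof (rule ccontr)
      assume "Kf D W G \<noteq> {}"
      then obtain H where "G \<union> H \<in> D" by (auto simp: Kf_def)
      moreover then have "finite (G \<union> H)" using DV fT fW by (meson PowD finite_UnI finite_subset subsetD)
      ultimately have "card G \<le> d" using cardle by (meson card_mono le_trans sup_ge1)
      then show False using dG by simp
    qed
  qed
  define Kc where "Kc j = Kf D W (SOME G. G \<subseteq> S \<and> card G = j)" for j
  have Kcex: "\<And>j. j \<le> card S \<Longrightarrow> (SOME G. G \<subseteq> S \<and> card G = j) \<subseteq> S \<and> card (SOME G. G \<subseteq> S \<and> card G = j) = j"
  proof -
    fix j assume "j \<le> card S"
    then obtain G where "G \<subseteq> S" "card G = j" using obtain_subset_with_card_n by metis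
    then show "(SOME G. G \<subseteq> S \<and> card G = j) \<subseteq> S \<and> card (SOME G. G \<subseteq> S \<and> card G = j) = j"
      by (metis (mono_tags, lifting) someI)
  qed
  have KcG: "\<And>G. G \<subseteq> S \<Longrightarrow> 1 \<le> card G \<Longrightarrow> Kf D W G = Kc (card G)"
  proof -
    fix G assume GS: "G \<subseteq> S" and G1: "1 \<le> card G"
    define G0 where "G0 = (SOME G'. G' \<subseteq> S \<and> card G' = card G)"
    have G0: "G0 \<subseteq> S" "card G0 = card G" using Kcex[of "card G"] GS fS card_mono unfolding G0_def by blast+
    show "Kf D W G = Kc (card G)"
    proof (cases "card G \<le> d")
      case True
      then show ?thesis using hom GS G0 G1 unfolding Kc_def G0_def[symmetric] by metis
    next
      case False
      have "finite G" "finite G0" using GS G0 fS finite_subset by blast+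
      then show ?thesis using Kbig False G0 unfolding Kc_def G0_def[symmetric] by simp
    qed
  qed
  obtain v0 where v0: "v0 \<in> S" using cS by fastforce
  define L where "L = Kc 1"
  have Lv0: "L = Kf D W {v0}" using KcG[of "{v0}"] v0 by (simp add: L_def)
  have KL: "\<And>A. A \<subseteq> S \<Longrightarrow> A \<noteq> {} \<Longrightarrow> Kf D W A \<subseteq> L"
  proof -
    fix A assume AS: "A \<subseteq> S" and Ane: "A \<noteq> {}"
    then obtain a where a: "a \<in> A" by blast
    have "Kf D W A \<subseteq> Kf D W {a}"
      using a dc by (auto simp: Kf_def)
    also have "\<dots> = L" using KcG[of "{a}"] a AS by (auto simp: L_def)
    finally show "Kf D W A \<subseteq> L" .
  qed
  have Lfin: "finite L" and LW: "L \<subseteq> Pow W" and Ldc: "\<forall>F\<in>L. \<forall>G\<subseteq>F. G\<in>L"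
    using Kfin KW Kdc by (simp_all add: Lv0)
  define P where "P j \<longleftrightarrow> (\<exists>z::nat set \<Rightarrow> 'k. z \<in> chains (Kc j) (int p - 1) \<and> bdry (Kc j) z = (\<lambda>_. 0)
      \<and> \<not> (\<exists>b\<in>chains L (int p). bdry L b = z))" for j
  have P1: "P 1"
  proof -
    have "v0 \<notin> W" using v0 ST disj by auto
    moreover have "v0 \<in> T" using v0 ST by auto
    ultimately have "reduced_homology_nonzero TYPE('k) (induced (lk D {v0}) W) (int p - 1)"
      "induced (lk D {v0}) W = L" using hyp lk_eq Lv0 by auto
    then have "reduced_homology_nonzero TYPE('k) L (int p - 1)" by simp
    then show ?thesis by (simp add: P_def reduced_homology_nonzero_def L_def)
  qed
  have Pd: "\<not> P (d + 1)"
  proof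
    assume "P (d + 1)"
    then obtain z :: "nat set \<Rightarrow> 'k" where z: "z \<in> chains (Kc (d + 1)) (int p - 1)"
      and nb: "\<not> (\<exists>b\<in>chains L (int p). bdry L b = z)" by (auto simp: P_def)
    define G0 where "G0 = (SOME G'. G' \<subseteq> S \<and> card G' = d + 1)"
    have G0: "G0 \<subseteq> S" "card G0 = d + 1" using Kcex[OF cS] unfolding G0_def by blast+
    have "Kc (d + 1) = {}" unfolding Kc_def G0_def[symmetric]
      by (rule Kbig) (use G0 fS finite_subset in auto)
    then have "z = (\<lambda>_. 0)" using z by (auto simp: chains_def)
    moreover have "(\<lambda>_. 0::'k) \<in> chains L (int p)" by (simp add: chains_def)
    moreover have "bdry L (\<lambda>_. 0::'k) = (\<lambda>_. 0)" by (rule bdry_zero)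
    ultimately show False using nb by blast
  qed
  define J where "J = {j. 1 \<le> j \<and> j \<le> d + 1 \<and> P j}"
  have fJ: "finite J" by (auto simp: J_def)
  have "1 \<in> J" using P1 by (simp add: J_def)
  define j0 where "j0 = Max J"
  have j0J: "j0 \<in> J" unfolding j0_def by (rule Max_in[OF fJ]) (use \<open>1 \<in> J\<close> in auto)
  then have Pj0: "P j0" and j01: "1 \<le> j0" and j0d: "j0 \<le> d" using Pd by (auto simp: J_def)
    (metis Suc_eq_plus1 le_SucE)
  have nPi: "\<not> P (j0 + 1)"
  proof
    assume "P (j0 + 1)"
    then have "j0 + 1 \<in> J" using j0d by (simp add: J_def)
    then have "j0 + 1 \<le> j0" using fJ by (simp add: j0_def)
    then show False by simp
  qed
  define i where "i = j0 + 1"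
  have i2: "2 \<le> i" using j01 by (simp add: i_def)
  obtain W' where W'S: "W' \<subseteq> S" and ci: "card W' = i" using cS j0d obtain_subset_with_card_n[of i S]
    unfolding i_def by (metis add_le_mono1 le_trans)
  obtain z :: "nat set \<Rightarrow> 'k" where zch0: "z \<in> chains (Kc j0) (int p - 1)" and zcy0: "bdry (Kc j0) z = (\<lambda>_. 0)"
    and znb: "\<not> (\<exists>b\<in>chains L (int p). bdry L b = z)" using Pj0 by (auto simp: P_def)
  obtain G1 where G1: "G1 \<subseteq> S" "card G1 = j0" using Kcex[of j0] cS j0d by fastforce
  have Kcj0: "Kc j0 = Kf D W G1" using KcG[OF G1(1)] G1 j01 by simp
  have G1ne: "G1 \<noteq> {}" using G1 j01 by auto
  have KcL: "Kc j0 \<subseteq> L" using KL[OF G1(1) G1ne] Kcj0 by simp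
  have fW': "finite W'" using W'S fS finite_subset by blast
  have disj': "W' \<inter> W = {}" using W'S ST disj by auto
  have zch: "z \<in> chains L (int p - 1)" using chains_mono[OF KcL] zch0 by blast
  have "bdry (Kc j0) z = bdry L z"
    by (rule bdry_mono[OF KcL Lfin _ zch0]) (use Kdc Kcj0 in simp)
  then have zcy: "bdry L z = (\<lambda>_. 0)" using zcy0 by simp
  have zsupp: "\<forall>G H. G \<subseteq> W' \<longrightarrow> card G = i - 1 \<longrightarrow> z H \<noteq> 0 \<longrightarrow> G \<union> H \<in> D"
  proof (intro allI impI)
    fix G H assume GW': "G \<subseteq> W'" and cG: "card G = i - 1" and zH: "z H \<noteq> 0"
    have "Kf D W G = Kc j0" using KcG[of G] GW' W'S cG j01 by (simp add: i_def)
    moreover have "H \<in> Kc j0" using zch0 zH by (auto simp: chains_def)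
    ultimately show "G \<union> H \<in> D" by (auto simp: Kf_def)
  qed
  have KW': "Kf D W W' = Kc i" using KcG[OF W'S] ci i2 by simp
  have top: "\<forall>c::nat set \<Rightarrow> 'k. c \<in> chains (Kf D W W') (int p - 1) \<longrightarrow> bdry (Kf D W W') c = (\<lambda>_. 0) \<longrightarrow> (\<exists>e\<in>chains L (int p). bdry L e = c)"
    using nPi unfolding KW' P_def i_def by blast
  have KL': "\<forall>A. A \<subseteq> W' \<longrightarrow> A \<noteq> {} \<longrightarrow> Kf D W A \<subseteq> L" using KL W'S by blast
  have "reduced_homology_nonzero TYPE('k) (induced D (W' \<union> W)) (int p + int i - 2)"
    by (rule core[OF finD dc fW fW' disj' ci i2 Lfin Ldc LW KL' zch zcy zsupp znb top])
  then show ?thesis using W'S ci i2 by auto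
qed




lemma ramsey_gen:
  assumes c0: "0 < c"
  shows "\<exists>N. \<forall>(U::'a set) (f::'a set \<Rightarrow> 'b) C. finite U \<and> N \<le> card U \<and> finite C \<and> card C = c
     \<and> (\<forall>G. G \<subseteq> U \<and> card G = r \<longrightarrow> f G \<in> C) \<longrightarrow>
     (\<exists>S\<subseteq>U. card S = m \<and> (\<forall>G1 G2. G1 \<subseteq> S \<and> G2 \<subseteq> S \<and> card G1 = r \<and> card G2 = r \<longrightarrow> f G1 = f G2))"
proof -
  obtain N :: nat where N: "partn_lst {..<N} (replicate c m) r" using ramsey_full by blast
  show ?thesis
  proof (rule exI[of _ N], intro allI impI)
    fix U :: "'a set" and f :: "'a set \<Rightarrow> 'b" and C
    assume a: "finite U \<and> N \<le> card U \<and> finite C \<and> card C = c \<and> (\<forall>G. G \<subseteq> U \<and> card G = r \<longrightarrow> f G \<in> C)"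
    have "N \<le> card U" using a by blast
    then obtain U' where U': "U' \<subseteq> U" "card U' = N" "finite U'" by (rule obtain_subset_with_card_n)
    obtain g where g: "bij_betw g {0..<N} U'" using ex_bij_betw_nat_finite[of U'] U' by auto
    obtain h where h: "bij_betw h C {0..<c}" using ex_bij_betw_finite_nat[of C] a by auto
    have ginj: "inj_on g {..<N}" using g by (simp add: bij_betw_def lessThan_atLeast0)
    have gim: "g ` {..<N} = U'" using g by (simp add: bij_betw_def lessThan_atLeast0)
    define F where "F G = h (f (g ` G))" for G
    have Fmap: "F \<in> nsets {..<N} r \<rightarrow> {..<length (replicate c m)}"
    proof
      fix G assume "G \<in> nsets {..<N} r"
      then have G: "G \<subseteq> {..<N}" "finite G" "card G = r" by (auto simp: nsets_def)
      have "inj_on g G" using G ginj by (rule_tac inj_on_subset) auto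
      then have "card (g ` G) = r" using G by (simp add: card_image)
      moreover have "g ` G \<subseteq> U" using G gim U' by blast
      ultimately have "f (g ` G) \<in> C" using a by blast
      then have "h (f (g ` G)) \<in> {0..<c}" using h by (auto simp: bij_betw_def)
      then show "F G \<in> {..<length (replicate c m)}" by (simp add: F_def)
    qed
    obtain i H where i: "i < length (replicate c m)" and H: "H \<in> nsets {..<N} (replicate c m ! i)"
      and FH: "F ` nsets H r \<subseteq> {i}" using partn_lstE[OF N Fmap refl] by metis
    have Hs: "H \<subseteq> {..<N}" "finite H" "card H = m" using H i by (auto simp: nsets_def)
    define S where "S = g ` H"
    have SU: "S \<subseteq> U" using Hs gim U' S_def by blast
    have "inj_on g H" using Hs ginj by (rule_tac inj_on_subset) auto
    then have cS: "card S = m" using Hs unfolding S_def by (simp add: card_image)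
    have key: "\<And>G1. G1 \<subseteq> S \<Longrightarrow> card G1 = r \<Longrightarrow> h (f G1) = i"
    proof -
      fix G1 assume G1: "G1 \<subseteq> S" "card G1 = r"
      define G' where "G' = H \<inter> g -` G1"
      have im: "g ` G' = G1" using G1 unfolding G'_def S_def by auto
      have inj': "inj_on g G'" using ginj Hs unfolding G'_def by (meson inf.coboundedI1 inj_on_subset)
      have "card G' = r" using card_image[OF inj'] im G1 by simp
      moreover have "G' \<subseteq> H" "finite G'" using Hs by (auto simp: G'_def)
      ultimately have "G' \<in> nsets H r" by (simp add: nsets_def)
      then have "F G' = i" using FH by blast
      then show "h (f G1) = i" using im by (simp add: F_def)
    qed
    have "\<forall>G1 G2. G1 \<subseteq> S \<and> G2 \<subseteq> S \<and> card G1 = r \<and> card G2 = r \<longrightarrow> f G1 = f G2"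
    proof (intro allI impI)
      fix G1 G2 assume b: "G1 \<subseteq> S \<and> G2 \<subseteq> S \<and> card G1 = r \<and> card G2 = r"
      have "G1 \<subseteq> U" "G2 \<subseteq> U" using b SU by auto
      then have "f G1 \<in> C" "f G2 \<in> C" using a b by blast+
      moreover have "h (f G1) = h (f G2)" using key[of G1] key[of G2] b by simp
      ultimately show "f G1 = f G2" using h by (auto simp: bij_betw_def inj_on_def)
    qed
    then show "\<exists>S\<subseteq>U. card S = m \<and> (\<forall>G1 G2. G1 \<subseteq> S \<and> G2 \<subseteq> S \<and> card G1 = r \<and> card G2 = r \<longrightarrow> f G1 = f G2)"
      using SU cS by blast
  qed
qed

lemma ramsey_iter:
  assumes c0: "0 < c"
  shows "\<exists>N. \<forall>(U::'a set) (f::'a set \<Rightarrow> 'b) C. finite U \<and> N \<le> card U \<and> finite C \<and> card C = c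
     \<and> (\<forall>G. G \<subseteq> U \<longrightarrow> f G \<in> C) \<longrightarrow>
     (\<exists>S\<subseteq>U. card S = m \<and> (\<forall>G1 G2. G1 \<subseteq> S \<and> G2 \<subseteq> S \<and> card G1 = card G2 \<and> 1 \<le> card G1 \<and> card G1 \<le> D \<longrightarrow> f G1 = f G2))"
proof (induction D arbitrary: m)
  case 0
  show ?case
  proof (rule exI[of _ m], intro allI impI)
    fix U :: "'a set" and f :: "'a set \<Rightarrow> 'b" and C
    assume a: "finite U \<and> m \<le> card U \<and> finite C \<and> card C = c \<and> (\<forall>G. G \<subseteq> U \<longrightarrow> f G \<in> C)"
    then obtain S where "S \<subseteq> U" "card S = m" using obtain_subset_with_card_n by metis
    then show "\<exists>S\<subseteq>U. card S = m \<and> (\<forall>G1 G2. G1 \<subseteq> S \<and> G2 \<subseteq> S \<and> card G1 = card G2 \<and> 1 \<le> card G1 \<and> card G1 \<le> 0 \<longrightarrow> f G1 = f G2)"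
      by auto
  qed
next
  case (Suc D)
  obtain N1 where N1: "\<forall>(U::'a set) (f::'a set \<Rightarrow> 'b) C. finite U \<and> N1 \<le> card U \<and> finite C \<and> card C = c
     \<and> (\<forall>G. G \<subseteq> U \<and> card G = Suc D \<longrightarrow> f G \<in> C) \<longrightarrow>
     (\<exists>S\<subseteq>U. card S = m \<and> (\<forall>G1 G2. G1 \<subseteq> S \<and> G2 \<subseteq> S \<and> card G1 = Suc D \<and> card G2 = Suc D \<longrightarrow> f G1 = f G2))"
    using ramsey_gen[OF c0, of "Suc D" m] by blast
  obtain N where N: "\<forall>(U::'a set) (f::'a set \<Rightarrow> 'b) C. finite U \<and> N \<le> card U \<and> finite C \<and> card C = c
     \<and> (\<forall>G. G \<subseteq> U \<longrightarrow> f G \<in> C) \<longrightarrow>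
     (\<exists>S\<subseteq>U. card S = N1 \<and> (\<forall>G1 G2. G1 \<subseteq> S \<and> G2 \<subseteq> S \<and> card G1 = card G2 \<and> 1 \<le> card G1 \<and> card G1 \<le> D \<longrightarrow> f G1 = f G2))"
    using Suc.IH[of N1] by blast
  show ?case
  proof (rule exI[of _ N], intro allI impI)
    fix U :: "'a set" and f :: "'a set \<Rightarrow> 'b" and C
    assume a: "finite U \<and> N \<le> card U \<and> finite C \<and> card C = c \<and> (\<forall>G. G \<subseteq> U \<longrightarrow> f G \<in> C)"
    then obtain S1 where S1: "S1 \<subseteq> U" "card S1 = N1"
      and h1: "\<forall>G1 G2. G1 \<subseteq> S1 \<and> G2 \<subseteq> S1 \<and> card G1 = card G2 \<and> 1 \<le> card G1 \<and> card G1 \<le> D \<longrightarrow> f G1 = f G2"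
      using N[THEN spec[of _ U], THEN spec[of _ f], THEN spec[of _ C]] a by blast
    have fS1: "finite S1" using S1 a finite_subset by blast
    have "\<forall>G. G \<subseteq> S1 \<and> card G = Suc D \<longrightarrow> f G \<in> C" using a S1 by blast
    then obtain S where S: "S \<subseteq> S1" "card S = m"
      and h2: "\<forall>G1 G2. G1 \<subseteq> S \<and> G2 \<subseteq> S \<and> card G1 = Suc D \<and> card G2 = Suc D \<longrightarrow> f G1 = f G2"
      using N1[THEN spec[of _ S1], THEN spec[of _ f], THEN spec[of _ C]] fS1 S1 a by blast
    have "\<forall>G1 G2. G1 \<subseteq> S \<and> G2 \<subseteq> S \<and> card G1 = card G2 \<and> 1 \<le> card G1 \<and> card G1 \<le> Suc D \<longrightarrow> f G1 = f G2"
    proof (intro allI impI)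
      fix G1 G2 assume b: "G1 \<subseteq> S \<and> G2 \<subseteq> S \<and> card G1 = card G2 \<and> 1 \<le> card G1 \<and> card G1 \<le> Suc D"
      show "f G1 = f G2"
      proof (cases "card G1 = Suc D")
        case True then show ?thesis using h2[THEN spec[of _ G1], THEN spec[of _ G2]] b by simp
      next
        case False
        then have "card G1 \<le> D" using b by simp
        moreover have "G1 \<subseteq> S1" "G2 \<subseteq> S1" using b S by auto
        ultimately show ?thesis using h1[THEN spec[of _ G1], THEN spec[of _ G2]] b by simp
      qed
    qed
    then show "\<exists>S\<subseteq>U. card S = m \<and> (\<forall>G1 G2. G1 \<subseteq> S \<and> G2 \<subseteq> S \<and> card G1 = card G2 \<and> 1 \<le> card G1 \<and> card G1 \<le> Suc D \<longrightarrow> f G1 = f G2)"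
      using S S1 by blast
  qed
qed




lemma count_sup:
  assumes fT: "finite T" and WT: "W' \<subseteq> T" and cW: "card W' = i" and iR: "i \<le> R"
  shows "card {U. U \<subseteq> T \<and> card U = R \<and> W' \<subseteq> U} = (card T - i) choose (R - i)"
proof -
  have fW': "finite W'" using WT fT finite_subset by blast
  have eq: "{U. U \<subseteq> T \<and> card U = R \<and> W' \<subseteq> U} = (\<lambda>V. V \<union> W') ` {V. V \<subseteq> T - W' \<and> card V = R - i}"
  proof (rule set_eqI, rule iffI)
    fix U assume "U \<in> {U. U \<subseteq> T \<and> card U = R \<and> W' \<subseteq> U}"
    then have U: "U \<subseteq> T" "card U = R" "W' \<subseteq> U" by auto
    have "card (U - W') = R - i" using U cW fW' by (simp add: card_Diff_subset)
    moreover have "U - W' \<subseteq> T - W'" using U by auto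
    moreover have "U = (U - W') \<union> W'" using U by auto
    ultimately show "U \<in> (\<lambda>V. V \<union> W') ` {V. V \<subseteq> T - W' \<and> card V = R - i}" by blast
  next
    fix U assume "U \<in> (\<lambda>V. V \<union> W') ` {V. V \<subseteq> T - W' \<and> card V = R - i}"
    then obtain V where V: "V \<subseteq> T - W'" "card V = R - i" "U = V \<union> W'" by auto
    have fV: "finite V" using V fT finite_subset by blast
    have "card U = card V + card W'" using V fV fW' by (simp add: card_Un_disjoint Int_commute Diff_disjoint disjoint_iff subset_iff)
    then have "card U = R" using V cW iR by simp
    then show "U \<in> {U. U \<subseteq> T \<and> card U = R \<and> W' \<subseteq> U}" using V WT by auto
  qed
  have inj: "inj_on (\<lambda>V. V \<union> W') {V. V \<subseteq> T - W' \<and> card V = R - i}"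
  proof (rule inj_onI)
    fix V1 V2 assume a: "V1 \<in> {V. V \<subseteq> T - W' \<and> card V = R - i}" "V2 \<in> {V. V \<subseteq> T - W' \<and> card V = R - i}"
      and e: "V1 \<union> W' = V2 \<union> W'"
    have "V1 = (V1 \<union> W') - W'" "V2 = (V2 \<union> W') - W'" using a by auto
    then show "V1 = V2" using e by simp
  qed
  have "card {U. U \<subseteq> T \<and> card U = R \<and> W' \<subseteq> U} = card {V. V \<subseteq> T - W' \<and> card V = R - i}"
    unfolding eq by (rule card_image[OF inj])
  also have "\<dots> = card (T - W') choose (R - i)" using fT by (simp add: n_subsets)
  also have "\<dots> = (card T - i) choose (R - i)" using WT fW' cW by (simp add: card_Diff_subset)
  finally show ?thesis .
qed

lemma pigeon_sum:
  fixes a :: "nat \<Rightarrow> nat"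
  assumes fI: "finite I" and ne: "I \<noteq> {}" and s: "M \<le> (\<Sum>i\<in>I. a i)"
  shows "\<exists>i\<in>I. M \<le> card I * a i"
proof (rule ccontr)
  assume "\<not> (\<exists>i\<in>I. M \<le> card I * a i)"
  then have lt: "\<And>i. i \<in> I \<Longrightarrow> card I * a i < M" by auto
  have "card I * (\<Sum>i\<in>I. a i) = (\<Sum>i\<in>I. card I * a i)" by (simp add: sum_distrib_left)
  also have "\<dots> < (\<Sum>i\<in>I. M)" by (rule sum_strict_mono[OF fI ne lt])
  also have "\<dots> = card I * M" by simp
  finally have "(\<Sum>i\<in>I. a i) < M" by simp
  then show False using s by simp
qed

lemma counting:
  fixes P :: "nat set \<Rightarrow> bool"
  assumes fT: "finite T" and cT: "card T = n" and R2: "2 \<le> R" and nR: "R \<le> n"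
    and loc: "\<forall>U. U \<subseteq> T \<and> card U = R \<longrightarrow> (\<exists>W'\<subseteq>U. 2 \<le> card W' \<and> P W')"
  shows "\<exists>i\<ge>2. (1 / (real R ^ R * real R * 2 ^ R)) * real n ^ i \<le> real (card {W'. W' \<subseteq> T \<and> card W' = i \<and> P W'})"
proof -
  define A where "A i = {W'. W' \<subseteq> T \<and> card W' = i \<and> P W'}" for i
  define B where "B W' = {U. U \<subseteq> T \<and> card U = R \<and> W' \<subseteq> U}" for W'
  define UU where "UU = {U. U \<subseteq> T \<and> card U = R}"
  have fA: "\<And>i. finite (A i)" using fT unfolding A_def by (rule_tac finite_subset[of _ "Pow T"]) auto
  have sub: "UU \<subseteq> (\<Union>i\<in>{2..R}. \<Union>W'\<in>A i. B W')"
  proof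
    fix U assume "U \<in> UU"
    then have U: "U \<subseteq> T" "card U = R" by (auto simp: UU_def)
    then obtain W' where W': "W' \<subseteq> U" "2 \<le> card W'" "P W'" using loc by blast
    have "finite U" using U fT finite_subset by blast
    then have "card W' \<le> R" using W' U card_mono by metis
    moreover have "W' \<in> A (card W')" using W' U by (auto simp: A_def)
    moreover have "U \<in> B W'" using W' U by (auto simp: B_def)
    ultimately show "U \<in> (\<Union>i\<in>{2..R}. \<Union>W'\<in>A i. B W')" using W' by auto
  qed
  have fin: "finite (\<Union>i\<in>{2..R}. \<Union>W'\<in>A i. B W')"
    by (rule finite_subset[of _ "Pow T"]) (auto simp: B_def fT)
  have "n choose R = card UU" using fT cT by (simp add: UU_def n_subsets)
  also have "\<dots> \<le> card (\<Union>i\<in>{2..R}. \<Union>W'\<in>A i. B W')" by (rule card_mono[OF fin sub])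
  also have "\<dots> \<le> (\<Sum>i\<in>{2..R}. card (\<Union>W'\<in>A i. B W'))" by (rule card_UN_le) simp
  also have "\<dots> \<le> (\<Sum>i\<in>{2..R}. \<Sum>W'\<in>A i. card (B W'))"
    by (rule sum_mono, rule card_UN_le[OF fA])
  also have "\<dots> = (\<Sum>i\<in>{2..R}. card (A i) * ((n - i) choose (R - i)))"
  proof (rule sum.cong[OF refl])
    fix i assume i: "i \<in> {2..R}"
    have "\<And>W'. W' \<in> A i \<Longrightarrow> card (B W') = (n - i) choose (R - i)"
      using count_sup[OF fT] i cT by (auto simp: A_def B_def)
    then show "(\<Sum>W'\<in>A i. card (B W')) = card (A i) * ((n - i) choose (R - i))" by simp
  qed
  finally have s: "n choose R \<le> (\<Sum>i\<in>{2..R}. card (A i) * ((n - i) choose (R - i)))" .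
  obtain i where i: "i \<in> {2..R}" and ii: "n choose R \<le> card {2..R} * (card (A i) * ((n - i) choose (R - i)))"
    using pigeon_sum[OF _ _ s] R2 by fastforce
  have cI: "card {2..R} = R - 1" using R2 by simp
  have iR: "i \<le> R" and i2: "2 \<le> i" using i by auto
  have "(n choose R) * (R choose i) = (n choose i) * ((n - i) choose (R - i))"
    by (rule choose_mult[OF iR nR])
  then have "(n choose i) * ((n - i) choose (R - i)) \<le> ((R - 1) * card (A i) * (R choose i)) * ((n - i) choose (R - i))"
    using ii cI by (metis (no_types, lifting) mult.assoc mult.commute mult_le_mono1)
  moreover have "0 < (n - i) choose (R - i)" using iR nR by simp
  ultimately have key: "n choose i \<le> (R - 1) * card (A i) * (R choose i)" by simp
  have r1: "(real n / real i) ^ i \<le> real (n choose i)" using iR nR by (intro binomial_ge_n_over_k_pow_k) simp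
  have r2: "real (n choose i) \<le> real (card (A i)) * (real R * 2 ^ R)"
  proof -
    have "(R - 1) * card (A i) * (R choose i) \<le> card (A i) * (R * 2 ^ R)"
    proof -
      have "(R - 1) * (R choose i) \<le> R * 2 ^ R" by (intro mult_le_mono binomial_le_pow2) simp
      then show ?thesis by (metis (no_types, lifting) mult.assoc mult.commute mult_le_mono2)
    qed
    then have "n choose i \<le> card (A i) * (R * 2 ^ R)" using key by linarith
    then show ?thesis by (metis of_nat_le_iff of_nat_mult of_nat_numeral of_nat_power)
  qed
  have r3: "real i ^ i \<le> real R ^ R"
  proof -
    have "real i ^ i \<le> real R ^ i" using iR by (intro power_mono) auto
    also have "\<dots> \<le> real R ^ R" using iR R2 by (intro power_increasing) auto
    finally show ?thesis .
  qed
  have ipos: "0 < real i ^ i" using i2 by simp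
  have Rpos: "0 < real R ^ R * real R * 2 ^ R" using R2 by simp
  have "real n ^ i / real R ^ R \<le> real n ^ i / real i ^ i"
    by (rule divide_left_mono[OF r3]) (use ipos R2 in auto)
  also have "\<dots> = (real n / real i) ^ i" by (simp add: power_divide)
  also have "\<dots> \<le> real (card (A i)) * (real R * 2 ^ R)" using r1 r2 by linarith
  finally have "real n ^ i / real R ^ R \<le> real (card (A i)) * (real R * 2 ^ R)" .
  then have "(1 / (real R ^ R * real R * 2 ^ R)) * real n ^ i \<le> real (card (A i))"
    using R2 by (simp add: field_simps)
  then show ?thesis using i2 unfolding A_def by blast
qed


lemma local_lemma:
  "\<exists>R. \<forall>(D::nat set set) T W U. simplicial_complex D \<and> (\<forall>F\<in>D. card F \<le> d) \<and> D \<subseteq> Pow (T \<union> W)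
     \<and> T \<inter> W = {} \<and> finite T \<and> finite W \<and> card W = w
     \<and> (\<forall>v\<in>T. reduced_homology_nonzero TYPE('k::field) (induced (lk D {v}) W) (int p - 1))
     \<and> U \<subseteq> T \<and> R \<le> card U \<longrightarrow>
     (\<exists>W'\<subseteq>U. 2 \<le> card W' \<and> reduced_homology_nonzero TYPE('k) (induced D (W' \<union> W)) (int p + int (card W') - 2))"
proof -
  have c0: "0 < (2::nat) ^ (2 ^ w)" by simp
  obtain R where R: "\<forall>(U::nat set) (f::nat set \<Rightarrow> nat set set) C. finite U \<and> R \<le> card U \<and> finite C \<and> card C = 2 ^ (2 ^ w)
     \<and> (\<forall>G. G \<subseteq> U \<longrightarrow> f G \<in> C) \<longrightarrow>
     (\<exists>S\<subseteq>U. card S = d + 1 \<and> (\<forall>G1 G2. G1 \<subseteq> S \<and> G2 \<subseteq> S \<and> card G1 = card G2 \<and> 1 \<le> card G1 \<and> card G1 \<le> d \<longrightarrow> f G1 = f G2))"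
    using ramsey_iter[OF c0, where m="d + 1" and D=d and 'a=nat and 'b="nat set set"] by (elim exE)
  show ?thesis
  proof (rule exI[of _ R], intro allI impI)
    fix D :: "nat set set" and T W U
    assume a: "simplicial_complex D \<and> (\<forall>F\<in>D. card F \<le> d) \<and> D \<subseteq> Pow (T \<union> W)
     \<and> T \<inter> W = {} \<and> finite T \<and> finite W \<and> card W = w
     \<and> (\<forall>v\<in>T. reduced_homology_nonzero TYPE('k::field) (induced (lk D {v}) W) (int p - 1))
     \<and> U \<subseteq> T \<and> R \<le> card U"
    have sc: "simplicial_complex D" and cle: "\<forall>F\<in>D. card F \<le> d" and DV: "D \<subseteq> Pow (T \<union> W)"
      and dj: "T \<inter> W = {}" and fT: "finite T" and fW: "finite W" and cW: "card W = w"
      and hyp: "\<forall>v\<in>T. reduced_homology_nonzero TYPE('k::field) (induced (lk D {v}) W) (int p - 1)"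
      and UT: "U \<subseteq> T" and RU: "R \<le> card U" using a by simp_all
    have fU: "finite U" using UT fT by (rule finite_subset)
    have fC: "finite (Pow (Pow W))" using a by simp
    have cC: "card (Pow (Pow W)) = 2 ^ (2 ^ w)" using a by (simp add: card_Pow)
    have fm: "\<forall>G. G \<subseteq> U \<longrightarrow> Kf D W G \<in> Pow (Pow W)" by (auto simp: Kf_def)
    obtain S where S: "S \<subseteq> U" "card S = d + 1"
      and hom: "\<forall>G1 G2. G1 \<subseteq> S \<and> G2 \<subseteq> S \<and> card G1 = card G2 \<and> 1 \<le> card G1 \<and> card G1 \<le> d \<longrightarrow> Kf D W G1 = Kf D W G2"
    proof -
      have pre: "finite U \<and> R \<le> card U \<and> finite (Pow (Pow W)) \<and> card (Pow (Pow W)) = 2 ^ (2 ^ w)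
     \<and> (\<forall>G. G \<subseteq> U \<longrightarrow> Kf D W G \<in> Pow (Pow W))" using fU RU fC cC fm by simp
      have "\<exists>S\<subseteq>U. card S = d + 1 \<and> (\<forall>G1 G2. G1 \<subseteq> S \<and> G2 \<subseteq> S \<and> card G1 = card G2 \<and> 1 \<le> card G1 \<and> card G1 \<le> d \<longrightarrow> Kf D W G1 = Kf D W G2)"
        by (rule mp[OF R[THEN spec[of _ U], THEN spec[of _ "Kf D W"], THEN spec[of _ "Pow (Pow W)"]] pre])
      then show ?thesis using that by blast
    qed
    have ST: "S \<subseteq> T" using S UT by (rule_tac subset_trans) auto
    have cS: "d + 1 \<le> card S" using S by simp
    obtain W' where "W' \<subseteq> S" "2 \<le> card W'" "reduced_homology_nonzero TYPE('k) (induced D (W' \<union> W)) (int p + int (card W') - 2)"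
      using homog[OF sc cle DV dj fT fW hyp ST cS hom] by blast
    then show "\<exists>W'\<subseteq>U. 2 \<le> card W' \<and> reduced_homology_nonzero TYPE('k) (induced D (W' \<union> W)) (int p + int (card W') - 2)"
      using S by blast
  qed
qed

theorem mainTheorem12:
  fixes d p w :: nat
  shows "\<exists>C::real. C > 0 \<and> (\<exists>N::nat. \<forall>(\<Delta>::nat set set) T W n.
    simplicial_complex \<Delta> \<and>
    (\<exists>F\<in>\<Delta>. card F = d) \<and> (\<forall>F\<in>\<Delta>. card F \<le> d) \<and>
    \<Delta> \<subseteq> Pow (T \<union> W) \<and> (\<forall>v\<in>T \<union> W. {v} \<in> \<Delta>) \<and>
    T \<inter> W = {} \<and> finite T \<and> finite W \<and> card T = n \<and> card W = w \<and> n \<ge> N \<and>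
    (\<forall>v\<in>T. reduced_homology_nonzero TYPE('k::field) (induced (lk \<Delta> {v}) W) (int p - 1))
    \<longrightarrow>
    (\<exists>i\<ge>2. real (card {W'. W' \<subseteq> T \<and> card W' = i \<and>
        reduced_homology_nonzero TYPE('k) (induced \<Delta> (W' \<union> W)) (int p + int i - 2)})
      \<ge> C * real n ^ i))"
proof -
  obtain R0 where R0: "\<forall>(D::nat set set) T W U. simplicial_complex D \<and> (\<forall>F\<in>D. card F \<le> d) \<and> D \<subseteq> Pow (T \<union> W)
     \<and> T \<inter> W = {} \<and> finite T \<and> finite W \<and> card W = w
     \<and> (\<forall>v\<in>T. reduced_homology_nonzero TYPE('k::field) (induced (lk D {v}) W) (int p - 1))
     \<and> U \<subseteq> T \<and> R0 \<le> card U \<longrightarrow>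
     (\<exists>W'\<subseteq>U. 2 \<le> card W' \<and> reduced_homology_nonzero TYPE('k) (induced D (W' \<union> W)) (int p + int (card W') - 2))"
    using local_lemma[where d=d and w=w and p=p and 'k='k] by (elim exE)
  define R where "R = max R0 2"
  have R2: "2 \<le> R" by (simp add: R_def)
  define C where "C = 1 / (real R ^ R * real R * 2 ^ R)"
  have Cpos: "C > 0" using R2 by (simp add: C_def)
  show ?thesis
  proof (rule exI[of _ C], rule conjI[OF Cpos], rule exI[of _ R], intro allI impI)
    fix \<Delta> :: "nat set set" and T W n
    assume a: "simplicial_complex \<Delta> \<and>
      (\<exists>F\<in>\<Delta>. card F = d) \<and> (\<forall>F\<in>\<Delta>. card F \<le> d) \<and>
      \<Delta> \<subseteq> Pow (T \<union> W) \<and> (\<forall>v\<in>T \<union> W. {v} \<in> \<Delta>) \<and>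
      T \<inter> W = {} \<and> finite T \<and> finite W \<and> card T = n \<and> card W = w \<and> n \<ge> R \<and>
      (\<forall>v\<in>T. reduced_homology_nonzero TYPE('k::field) (induced (lk \<Delta> {v}) W) (int p - 1))"
    define P where "P W' \<longleftrightarrow> reduced_homology_nonzero TYPE('k) (induced \<Delta> (W' \<union> W)) (int p + int (card W') - 2)" for W'
    have loc: "\<forall>U. U \<subseteq> T \<and> card U = R \<longrightarrow> (\<exists>W'\<subseteq>U. 2 \<le> card W' \<and> P W')"
    proof (intro allI impI)
      fix U assume U: "U \<subseteq> T \<and> card U = R"
      then have "R0 \<le> card U" by (simp add: R_def)
      moreover have "simplicial_complex \<Delta> \<and> (\<forall>F\<in>\<Delta>. card F \<le> d) \<and> \<Delta> \<subseteq> Pow (T \<union> W)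
     \<and> T \<inter> W = {} \<and> finite T \<and> finite W \<and> card W = w
     \<and> (\<forall>v\<in>T. reduced_homology_nonzero TYPE('k::field) (induced (lk \<Delta> {v}) W) (int p - 1))
     \<and> U \<subseteq> T" using a U by simp
      ultimately have pre: "simplicial_complex \<Delta> \<and> (\<forall>F\<in>\<Delta>. card F \<le> d) \<and> \<Delta> \<subseteq> Pow (T \<union> W)
     \<and> T \<inter> W = {} \<and> finite T \<and> finite W \<and> card W = w
     \<and> (\<forall>v\<in>T. reduced_homology_nonzero TYPE('k::field) (induced (lk \<Delta> {v}) W) (int p - 1))
     \<and> U \<subseteq> T \<and> R0 \<le> card U" by simp
      show "\<exists>W'\<subseteq>U. 2 \<le> card W' \<and> P W'"
        using mp[OF R0[THEN spec[of _ \<Delta>], THEN spec[of _ T], THEN spec[of _ W], THEN spec[of _ U]] pre]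
        unfolding P_def .
    qed
    obtain i where i: "2 \<le> i" and ci: "C * real n ^ i \<le> real (card {W'. W' \<subseteq> T \<and> card W' = i \<and> P W'})"
    proof -
      have fT: "finite T" and cT: "card T = n" and nR: "R \<le> n" using a by simp_all
      show ?thesis using counting[OF fT cT R2 nR loc] that unfolding C_def by blast
    qed
    have eq: "{W'. W' \<subseteq> T \<and> card W' = i \<and> P W'} = {W'. W' \<subseteq> T \<and> card W' = i \<and>
        reduced_homology_nonzero TYPE('k) (induced \<Delta> (W' \<union> W)) (int p + int i - 2)}"
    proof (rule Collect_cong)
      fix W'
      show "(W' \<subseteq> T \<and> card W' = i \<and> P W') = (W' \<subseteq> T \<and> card W' = i \<and>
        reduced_homology_nonzero TYPE('k) (induced \<Delta> (W' \<union> W)) (int p + int i - 2))"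
        unfolding P_def by (cases "card W' = i") simp_all
    qed
    show "\<exists>i\<ge>2. real (card {W'. W' \<subseteq> T \<and> card W' = i \<and>
        reduced_homology_nonzero TYPE('k) (induced \<Delta> (W' \<union> W)) (int p + int i - 2)})
      \<ge> C * real n ^ i"
      by (rule exI[of _ i], rule conjI[OF i]) (use ci in \<open>simp only: eq\<close>)
  qed
qed

end
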